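(* For every integer $n\ge 3$, $|\mathfrak D^1_{2n}(123)|=4$.
   Context: A Dumont permutation of the first kind of length $2n$ is a permutation $\pi\in\mathfrak S_{2n}$ such that for every $i=1,\dots,2n$: if $\pi(i)$ is even then $i<2n$ and $\pi(i)>\pi(i+1)$; if $\pi(i)$ is odd then $i=2n$ or $\pi(i)<\pi(i+1)$. $\mathfrak D^1_{2n}$ denotes the set of these. A permutation $\sigma$ contains a pattern $\tau\in\mathfrak S_k$ if some subsequence $(\sigma(i_1),\dots,\sigma(i_k))$, $i_1<\dots<i_k$, is order-isomorphic to $\tau$; otherwise $\sigma$ avoids $\tau$. $\mathfrak D^1_{2n}(T)$ denotes the set of permutations in $\mathfrak D^1_{2n}$ avoiding every pattern in $T$. *)

theory Defs
  imports "HOL-Combinatorics.Permutations"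
begin

text \<open>Permutations of [m] = {1..m} are functions nat => nat that permute {1..m}
  (identity outside). Patterns tau in S_k are likewise permutations of {1..k}.\<close>

definition dumont1 :: "nat \<Rightarrow> (nat \<Rightarrow> nat) set" where
  "dumont1 n = {\<pi>. \<pi> permutes {1..2*n} \<and>
     (\<forall>i\<in>{1..2*n}.
        (even (\<pi> i) \<longrightarrow> i < 2*n \<and> \<pi> i > \<pi> (Suc i)) \<and>
        (odd (\<pi> i) \<longrightarrow> i = 2*n \<or> \<pi> i < \<pi> (Suc i)))}"

definition contains_pattern :: "nat \<Rightarrow> (nat \<Rightarrow> nat) \<Rightarrow> nat \<Rightarrow> (nat \<Rightarrow> nat) \<Rightarrow> bool" where
  "contains_pattern m \<sigma> k \<tau> \<longleftrightarrow>
     (\<exists>idx. strict_mono_on {1..k} idx \<and> idx ` {1..k} \<subseteq> {1..m} \<and>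
        (\<forall>a\<in>{1..k}. \<forall>b\<in>{1..k}. \<sigma> (idx a) < \<sigma> (idx b) \<longleftrightarrow> \<tau> a < \<tau> b))"

definition avoids_pattern :: "nat \<Rightarrow> (nat \<Rightarrow> nat) \<Rightarrow> nat \<Rightarrow> (nat \<Rightarrow> nat) \<Rightarrow> bool" where
  "avoids_pattern m \<sigma> k \<tau> \<longleftrightarrow> \<not> contains_pattern m \<sigma> k \<tau>"

definition pat123 :: "nat \<Rightarrow> nat" where
  "pat123 = id"

end

theory Submission imports Defs "HOL-Combinatorics.Multiset_Permutations" begin
definition dumL :: "nat list \<Rightarrow> bool" where
 "dumL xs = (\<forall>j\<in>set [0..<length xs]. (even (xs!j) \<longrightarrow> Suc j < length xs \<and> xs!j > xs!Suc j) \<and> (odd (xs!j) \<longrightarrow> Suc j = length xs \<or> xs!j < xs!Suc j))"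
definition avL :: "nat list \<Rightarrow> bool" where
 "avL xs = (\<forall>i\<in>set [0..<length xs]. \<forall>j\<in>set [0..<length xs]. \<forall>k\<in>set [0..<length xs]. \<not>(i<j \<and> j<k \<and> xs!i<xs!j \<and> xs!j<xs!k))"

lemma dumL_alt: "dumL xs = (\<forall>j<length xs. (even (xs!j) \<longrightarrow> Suc j < length xs \<and> xs!j > xs!Suc j) \<and> (odd (xs!j) \<longrightarrow> Suc j = length xs \<or> xs!j < xs!Suc j))"
  unfolding dumL_def set_upt atLeast0LessThan Ball_def lessThan_iff by blast
lemma avL_alt: "avL xs = (\<forall>i j k. i<j \<longrightarrow> j<k \<longrightarrow> k<length xs \<longrightarrow> \<not>(xs!i<xs!j \<and> xs!j<xs!k))"
  unfolding avL_def set_upt atLeast0LessThan Ball_def lessThan_iff by (blast dest: less_trans)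

definition Lp :: "nat \<Rightarrow> (nat \<Rightarrow> nat) \<Rightarrow> nat list" where
  "Lp m \<pi> = map (\<lambda>j. \<pi> (Suc j)) [0..<m]"
lemma nthL: "j < m \<Longrightarrow> Lp m \<pi> ! j = \<pi> (Suc j)"
  by (simp add: Lp_def del: upt_Suc)
lemma lenL[simp]: "length (Lp m \<pi>) = m"
  by (simp add: Lp_def del: upt_Suc)

lemma dum_iff:
  assumes p: "\<pi> permutes {1..m}"
  shows "(\<forall>i\<in>{1..m}.
        (even (\<pi> i) \<longrightarrow> i < m \<and> \<pi> i > \<pi> (Suc i)) \<and>
        (odd (\<pi> i) \<longrightarrow> i = m \<or> \<pi> i < \<pi> (Suc i))) \<longleftrightarrow> dumL (Lp m \<pi>)"
proof -
  have e: "(\<forall>i\<in>{1..m}. P i) \<longleftrightarrow> (\<forall>j<m. P (Suc j))" for P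
  proof
    assume "\<forall>i\<in>{1..m}. P i" then show "\<forall>j<m. P (Suc j)" by simp
  next
    assume a: "\<forall>j<m. P (Suc j)"
    show "\<forall>i\<in>{1..m}. P i"
    proof
      fix i assume "i \<in> {1..m}"
      then obtain j where "i = Suc j" "j < m" by (cases i) auto
      then show "P i" using a by simp
    qed
  qed
  have pt: "((even (\<pi> (Suc j)) \<longrightarrow> Suc j < m \<and> \<pi> (Suc j) > \<pi> (Suc (Suc j))) \<and>
        (odd (\<pi> (Suc j)) \<longrightarrow> Suc j = m \<or> \<pi> (Suc j) < \<pi> (Suc (Suc j)))) \<longleftrightarrow>
        ((even (Lp m \<pi>!j) \<longrightarrow> Suc j < m \<and> Lp m \<pi>!j > Lp m \<pi>!Suc j) \<and>
         (odd (Lp m \<pi>!j) \<longrightarrow> Suc j = m \<or> Lp m \<pi>!j < Lp m \<pi>!Suc j))"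
    if "j < m" for j
  proof (cases "Suc j < m")
    case True
    then show ?thesis using that by (simp add: nthL)
  next
    case False
    then have "Suc j = m" using that by simp
    moreover have "\<pi> (Suc m) = Suc m" using p by (simp add: permutes_not_in)
    ultimately show ?thesis using that by (simp add: nthL)
  qed
  show ?thesis unfolding e dumL_alt using pt by simp
qed

lemma three: "{1..3::nat} = {1,2,3}" by auto

lemma pat_iff: "contains_pattern m \<pi> 3 pat123 \<longleftrightarrow> \<not> avL (Lp m \<pi>)"
proof
  assume "contains_pattern m \<pi> 3 pat123"
  then obtain idx where sm: "strict_mono_on {1..3} idx" and im: "idx ` {1..3} \<subseteq> {1..m}"
    and c: "\<forall>a\<in>{1..3}. \<forall>b\<in>{1..3}. \<pi> (idx a) < \<pi> (idx b) \<longleftrightarrow> pat123 a < pat123 b"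
    unfolding contains_pattern_def by blast
  have i12: "idx 1 < idx 2" and i23: "idx 2 < idx 3" using sm by (auto intro: strict_mono_onD)
  have r: "idx 1 \<in> {1..m}" "idx 2 \<in> {1..m}" "idx 3 \<in> {1..m}" using im unfolding three by auto
  have v: "\<pi> (idx 1) < \<pi> (idx 2)" "\<pi> (idx 2) < \<pi> (idx 3)" using c by (auto simp: pat123_def)
  have n: "Lp m \<pi> ! (idx a - 1) = \<pi> (idx a)" if "idx a \<in> {1..m}" for a
    using that nthL[of "idx a - 1" m \<pi>] by auto
  show "\<not> avL (Lp m \<pi>)" unfolding avL_alt
    apply (simp)
    apply (rule exI[of _ "idx 1 - 1"], rule exI[of _ "idx 2 - 1"], rule conjI)
    using r i12 apply simp
    apply (rule exI[of _ "idx 3 - 1"])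
    using r i12 i23 v n[OF r(1)] n[OF r(2)] n[OF r(3)] by auto
next
  assume "\<not> avL (Lp m \<pi>)"
  then obtain i j k where ijk: "i < j" "j < k" "k < m" and v: "Lp m \<pi> ! i < Lp m \<pi> ! j" "Lp m \<pi> ! j < Lp m \<pi> ! k"
    unfolding avL_alt by auto
  have v2: "\<pi> (Suc i) < \<pi> (Suc j)" "\<pi> (Suc j) < \<pi> (Suc k)" using v ijk by (auto simp: nthL)
  define idx where "idx = (\<lambda>a::nat. if a = 1 then Suc i else if a = 2 then Suc j else Suc k)"
  have "strict_mono_on {1..3} idx"
    unfolding strict_mono_on_def three idx_def using ijk by auto
  moreover have "idx ` {1..3} \<subseteq> {1..m}" unfolding three idx_def using ijk by auto
  moreover have "\<forall>a\<in>{1..3}. \<forall>b\<in>{1..3}. \<pi> (idx a) < \<pi> (idx b) \<longleftrightarrow> pat123 a < pat123 b"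
    unfolding three idx_def pat123_def using v2 by auto
  ultimately show "contains_pattern m \<pi> 3 pat123" unfolding contains_pattern_def by blast
qed

definition SL :: "nat \<Rightarrow> nat list set" where
  "SL m = {xs \<in> permutations_of_set {1..m}. dumL xs \<and> avL xs}"

lemma setL: "set (Lp m \<pi>) = \<pi> ` {1..m}"
proof (rule set_eqI)
  fix y
  show "y \<in> set (Lp m \<pi>) \<longleftrightarrow> y \<in> \<pi> ` {1..m}"
  proof
    assume "y \<in> set (Lp m \<pi>)"
    then obtain j where "j < m" "y = Lp m \<pi> ! j" by (auto simp: in_set_conv_nth)
    then show "y \<in> \<pi> ` {1..m}" by (auto simp: nthL)
  next
    assume "y \<in> \<pi> ` {1..m}"
    then obtain i where i: "i \<in> {1..m}" "y = \<pi> i" by auto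
    then have "i - 1 < m" "Lp m \<pi> ! (i - 1) = y" using nthL[of "i-1" m \<pi>] by auto
    then show "y \<in> set (Lp m \<pi>)" by (metis lenL nth_mem)
  qed
qed

lemma distinctL: assumes "\<pi> permutes {1..m}" shows "distinct (Lp m \<pi>)"
proof -
  have inj: "inj_on \<pi> {1..m}" using assms by (rule permutes_inj_on)
  show ?thesis unfolding distinct_conv_nth lenL
  proof (intro allI impI)
    fix i j assume "i < m" "j < m" "i \<noteq> j"
    show "Lp m \<pi> ! i \<noteq> Lp m \<pi> ! j"
    proof
      assume "Lp m \<pi> ! i = Lp m \<pi> ! j"
      then have "\<pi> (Suc i) = \<pi> (Suc j)" using nthL[OF \<open>i < m\<close>] nthL[OF \<open>j < m\<close>] by simp
      moreover have "Suc i \<in> {1..m}" "Suc j \<in> {1..m}" using \<open>i < m\<close> \<open>j < m\<close> by auto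
      ultimately have "Suc i = Suc j" using inj_onD[OF inj] by blast
      then show False using \<open>i \<noteq> j\<close> by simp
    qed
  qed
qed

lemma card_bridge: "card {\<pi> \<in> dumont1 n. avoids_pattern (2*n) \<pi> 3 pat123} = card (SL (2*n))"
proof -
  define m where "m = 2*n"
  define A where "A = {\<pi> \<in> dumont1 n. avoids_pattern (2*n) \<pi> 3 pat123}"
  have A: "A = {\<pi>. \<pi> permutes {1..m} \<and> dumL (Lp m \<pi>) \<and> avL (Lp m \<pi>)}"
    unfolding A_def dumont1_def avoids_pattern_def m_def using dum_iff pat_iff by auto
  have inj: "inj_on (Lp m) A"
  proof (rule inj_onI)
    fix \<pi> \<sigma> assume "\<pi> \<in> A" "\<sigma> \<in> A" and eq: "Lp m \<pi> = Lp m \<sigma>"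
    then have p: "\<pi> permutes {1..m}" "\<sigma> permutes {1..m}" unfolding A by auto
    show "\<pi> = \<sigma>"
    proof
      fix i show "\<pi> i = \<sigma> i"
      proof (cases "i \<in> {1..m}")
        case True
        then have "i - 1 < m" "Suc (i - 1) = i" by auto
        then show ?thesis using eq nthL[of "i-1" m \<pi>] nthL[of "i-1" m \<sigma>] by metis
      next
        case False
        then show ?thesis using p by (simp add: permutes_not_in)
      qed
    qed
  qed
  have img: "Lp m ` A = SL m"
  proof
    show "Lp m ` A \<subseteq> SL m"
    proof
      fix xs assume "xs \<in> Lp m ` A"
      then obtain \<pi> where pA: "\<pi> \<in> A" and x: "xs = Lp m \<pi>" by auto
      then have p: "\<pi> permutes {1..m}" unfolding A by auto
      have "set xs = {1..m}" unfolding x setL using permutes_image[OF p] .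
      moreover have "distinct xs" unfolding x using distinctL[OF p] .
      ultimately show "xs \<in> SL m" using pA x unfolding A SL_def permutations_of_set_def by auto
    qed
  next
    show "SL m \<subseteq> Lp m ` A"
    proof
      fix xs assume xs: "xs \<in> SL m"
      then have len: "length xs = m" using length_finite_permutations_of_set unfolding SL_def by fastforce
      have st: "set xs = {1..m}" and dis: "distinct xs" using xs unfolding SL_def permutations_of_set_def by auto
      define \<pi> where "\<pi> = (\<lambda>i. if i \<in> {1..m} then xs ! (i - 1) else i)"
      have L: "Lp m \<pi> = xs"
        by (rule nth_equalityI) (auto simp: len nthL \<pi>_def)
      have im: "\<pi> ` {1..m} = {1..m}" using setL[of m \<pi>] L st by simp
      have "inj_on \<pi> {1..m}"
      proof (rule inj_onI)
        fix a b assume a: "a \<in> {1..m}" and b: "b \<in> {1..m}" and e: "\<pi> a = \<pi> b"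
        then have "xs ! (a - 1) = xs ! (b - 1)" by (simp add: \<pi>_def)
        then have "a - 1 = b - 1" using nth_eq_iff_index_eq[OF dis, of "a-1" "b-1"] a b len by auto
        then show "a = b" using a b by auto
      qed
      then have "bij_betw \<pi> {1..m} {1..m}" using im by (simp add: bij_betw_def)
      then have "\<pi> permutes {1..m}" by (rule bij_imp_permutes) (auto simp: \<pi>_def)
      then have "\<pi> \<in> A" unfolding A using L xs unfolding SL_def by auto
      then show "xs \<in> Lp m ` A" using L by force
    qed
  qed
  show ?thesis using card_image[OF inj] img unfolding A_def m_def by simp
qed

lemma dumL_cons2: assumes h: "dumL (a#b#ys)" shows "dumL ys"
  unfolding dumL_alt
proof (intro allI impI)
  fix j assume "j < length ys"
  then show "(even (ys!j) \<longrightarrow> Suc j < length ys \<and> ys!j > ys!Suc j) \<and> (odd (ys!j) \<longrightarrow> Suc j = length ys \<or> ys!j < ys!Suc j)"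
    using h unfolding dumL_alt by (drule_tac x="Suc (Suc j)" in spec) simp
qed

lemma avL_cons2: assumes h: "avL (a#b#ys)" shows "avL ys"
  unfolding avL_alt
proof (intro allI impI)
  fix i j k assume "i < j" "j < k" "k < length ys"
  then show "\<not> (ys!i < ys!j \<and> ys!j < ys!k)"
    using h unfolding avL_alt
    by (drule_tac x="Suc (Suc i)" in spec, drule_tac x="Suc (Suc j)" in spec, drule_tac x="Suc (Suc k)" in spec) simp
qed

lemma step_sup:
  assumes k: "k \<ge> 3" and ys: "ys \<in> SL (2*k)"
  shows "(2*k+1)#(2*k+2)#ys \<in> SL (2*Suc k)"
proof -
  have len: "length ys = 2*k" using ys length_finite_permutations_of_set unfolding SL_def by fastforce
  have st: "set ys = {1..2*k}" and dis: "distinct ys" and d: "dumL ys" and a: "avL ys"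
    using ys unfolding SL_def permutations_of_set_def by auto
  define xs where "xs = (2*k+1)#(2*k+2)#ys"
  have lx: "length xs = 2*k+2" using len xs_def by simp
  have bnd: "ys ! t \<le> 2*k" if "t < 2*k" for t using st len that nth_mem[of t ys] by auto
  have bx: "xs ! t \<le> 2*k+2" if "t < 2*k+2" for t
  proof (cases t)
    case 0 then show ?thesis by (simp add: xs_def)
  next
    case (Suc t') then show ?thesis using that bnd[of "t' - 1"] by (cases t') (auto simp: xs_def)
  qed
  have "set xs = {1..2*Suc k}" unfolding xs_def using st by auto
  moreover have "distinct xs" unfolding xs_def using st dis by auto
  moreover have "dumL xs" unfolding dumL_alt lx
  proof (intro allI impI)
    fix j assume j: "j < 2*k+2"
    show "(even (xs!j) \<longrightarrow> Suc j < 2*k+2 \<and> xs!j > xs!Suc j) \<and> (odd (xs!j) \<longrightarrow> Suc j = 2*k+2 \<or> xs!j < xs!Suc j)"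
    proof (cases j)
      case 0 then show ?thesis by (simp add: xs_def)
    next
      case (Suc j')
      show ?thesis
      proof (cases j')
        case 0
        have "ys ! 0 \<le> 2*k" using bnd k by simp
        then show ?thesis using Suc 0 k by (simp add: xs_def)
      next
        case (Suc j'')
        have "j'' < length ys" using j len \<open>j = Suc j'\<close> Suc by simp
        then show ?thesis using d \<open>j = Suc j'\<close> Suc len unfolding dumL_alt xs_def
          by (drule_tac x=j'' in spec) simp
      qed
    qed
  qed
  moreover have "avL xs" unfolding avL_alt lx
  proof (intro allI impI notI)
    fix i j l assume ij: "i < j" "j < l" "l < 2*k+2" and v: "xs!i < xs!j \<and> xs!j < xs!l"
    show False
    proof (cases i)
      case 0
      then have "xs ! j > 2*k+1" using v by (simp add: xs_def)
      then have "j = 1"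
      proof (cases "j \<ge> 2")
        case True
        define j'' where "j'' = j - 2"
        have jj: "j = Suc (Suc j'')" using True by (simp add: j''_def)
        have "xs ! j = ys ! j''" unfolding xs_def jj by simp
        moreover have "j'' < 2*k" using ij jj by simp
        ultimately show ?thesis using bnd[of j''] \<open>xs ! j > 2*k+1\<close> by simp
      qed (use ij 0 in auto)
      then show False using v bx[of l] ij by (simp add: xs_def)
    next
      case (Suc i')
      show False
      proof (cases i')
        case 0 then show False using v bx[of j] ij Suc by (simp add: xs_def)
      next
        case (Suc i'')
        obtain j'' l'' where jl: "j = Suc (Suc j'')" "l = Suc (Suc l'')" using ij \<open>i = Suc i'\<close> Suc
          by (metis Suc_lessE)
        show False using a v ij jl \<open>i = Suc i'\<close> Suc len unfolding avL_alt xs_def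
          by (drule_tac x=i'' in spec, drule_tac x=j'' in spec, drule_tac x=l'' in spec) simp
      qed
    qed
  qed
  ultimately have "xs \<in> SL (2*Suc k)" unfolding SL_def permutations_of_set_def by blast
  then show ?thesis by (simp only: xs_def)
qed

lemma step_sub:
  assumes k: "k \<ge> 3" and xs: "xs \<in> SL (2*Suc k)"
  shows "\<exists>ys \<in> SL (2*k). xs = (2*k+1)#(2*k+2)#ys"
proof -
  define M where "M = 2*k+2"
  have len: "length xs = M" using xs length_finite_permutations_of_set unfolding SL_def M_def by fastforce
  have st: "set xs = {1..M}" and dis: "distinct xs" and d: "dumL xs" and a: "avL xs"
    using xs unfolding SL_def permutations_of_set_def M_def by auto
  have bnd: "1 \<le> xs ! t \<and> xs ! t \<le> M" if "t < M" for t using st len that nth_mem[of t xs] by auto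
  have inj: "t = t'" if "t < M" "t' < M" "xs ! t = xs ! t'" for t t'
    using nth_eq_iff_index_eq[OF dis] that len by auto
  have ex: "\<exists>t<M. xs ! t = v" if "v \<in> {1..M}" for v
    using that st len by (metis in_set_conv_nth)
  obtain q where q: "q < M" "xs ! q = 2*k+1" using ex[of "2*k+1"] M_def by auto
  obtain p where p: "p < M" "xs ! p = M" using ex[of M] M_def by auto
  have D: "odd (xs ! t) \<Longrightarrow> Suc t = M \<or> xs ! t < xs ! Suc t" if "t < M" for t
    using d that len unfolding dumL_alt by blast
  have A: "\<not> (xs ! i < xs ! j \<and> xs ! j < xs ! l)" if "i < j" "j < l" "l < M" for i j l
    using a that len unfolding avL_alt by blast
  have qn: "q \<noteq> M - 1"
  proof
    assume qM: "q = M - 1"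
    have key: "t = M - 2 \<or> Suc t = p" if t: "t < M" "odd (xs ! t)" "xs ! t \<noteq> 2*k+1" for t
    proof (rule ccontr)
      assume nc: "\<not> (t = M - 2 \<or> Suc t = p)"
      have "t \<noteq> q" using t q by auto
      then have st: "Suc t < M - 1" using t qM nc M_def by auto
      have "Suc t \<noteq> M" using st by simp
      then have lt: "xs ! t < xs ! Suc t" using D[OF t(1) t(2)] by simp
      have sM: "Suc t < M" using st by simp
      have "xs ! Suc t \<noteq> M"
      proof
        assume "xs ! Suc t = M"
        then have "Suc t = p" using inj[OF sM p(1)] p(2) by simp
        then show False using nc by simp
      qed
      moreover have "xs ! Suc t \<noteq> 2*k+1"
      proof
        assume "xs ! Suc t = 2*k+1"
        then have "Suc t = q" using inj[OF sM q(1)] q(2) by simp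
        then show False using st qM by simp
      qed
      ultimately have "xs ! Suc t < xs ! q" using bnd[of "Suc t"] st q M_def by auto
      then show False using A[of t "Suc t" q] lt st qM q by auto
    qed
    obtain a1 where a1: "a1 < M" "xs ! a1 = 1" using ex[of 1] M_def by auto
    obtain a3 where a3: "a3 < M" "xs ! a3 = 3" using ex[of 3] M_def k by auto
    obtain a5 where a5: "a5 < M" "xs ! a5 = 5" using ex[of 5] M_def k by auto
    have "a1 = M - 2 \<or> Suc a1 = p" using key[of a1] a1 k by auto
    moreover have "a3 = M - 2 \<or> Suc a3 = p" using key[of a3] a3 k by auto
    moreover have "a5 = M - 2 \<or> Suc a5 = p" using key[of a5] a5 k by auto
    moreover have "a1 \<noteq> a3" "a1 \<noteq> a5" "a3 \<noteq> a5" using a1 a3 a5 by auto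
    ultimately show False by linarith
  qed
  then have sq: "Suc q < M" using q by auto
  have "odd (xs ! q)" using q by simp
  then have "xs ! q < xs ! Suc q" using D[of q] q sq by auto
  then have q1: "xs ! Suc q = M" using bnd[of "Suc q"] sq q M_def by auto
  have q0: "q = 0"
  proof (rule ccontr)
    assume "q \<noteq> 0"
    then have "xs ! 0 \<noteq> 2*k+1" "xs ! 0 \<noteq> M" using inj[of 0 q] inj[of 0 "Suc q"] q sq q1 by auto
    then have "xs ! 0 < xs ! q" using bnd[of 0] q M_def by auto
    then show False using A[of 0 q "Suc q"] \<open>q \<noteq> 0\<close> sq q q1 M_def by auto
  qed
  obtain x0 x1 ys where xs_eq: "xs = x0 # x1 # ys" using len M_def
    by (metis length_0_conv length_Suc_conv nat.distinct(1) add_2_eq_Suc')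
  have x0: "x0 = 2*k+1" using q q0 xs_eq by simp
  have x1: "x1 = 2*k+2" using q1 q0 xs_eq M_def by simp
  have "length ys = 2*k" using len xs_eq M_def by simp
  have "distinct ys" using dis xs_eq by simp
  moreover have "set ys = {1..2*k}"
  proof -
    have E: "insert x0 (insert x1 (set ys)) = {1..2*k+2}" using st xs_eq M_def by simp
    have n: "x0 \<notin> set ys" "x1 \<notin> set ys" using dis xs_eq by auto
    show ?thesis
    proof (rule set_eqI)
      fix x
      have i1: "x \<in> set ys \<Longrightarrow> x \<in> {1..2*k+2}" using E by blast
      have i2: "x \<in> {1..2*k+2} \<Longrightarrow> x = x0 \<or> x = x1 \<or> x \<in> set ys" using E by blast
      show "x \<in> set ys \<longleftrightarrow> x \<in> {1..2*k}"
      proof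
        assume h: "x \<in> set ys"
        then have "x \<noteq> 2*k+1" "x \<noteq> 2*k+2" using n x0 x1 by auto
        then show "x \<in> {1..2*k}" using i1[OF h] by auto
      next
        assume "x \<in> {1..2*k}"
        then show "x \<in> set ys" using i2 x0 x1 by auto
      qed
    qed
  qed
  moreover have "dumL ys" using d xs_eq dumL_cons2 by blast
  moreover have "avL ys" using a xs_eq avL_cons2 by blast
  ultimately have "ys \<in> SL (2*k)" unfolding SL_def permutations_of_set_def by simp
  then show ?thesis using xs_eq x0 x1 by blast
qed

lemma cardSL: assumes "k \<ge> 3" shows "card (SL (2*k)) = 4"
  using assms
proof (induction k rule: nat_induct_at_least)
  case base
  have e: "{1..2*3::nat} = set [1..<7]" by auto
  have "SL (2*3) = set (filter (\<lambda>xs. dumL xs \<and> avL xs) (permutations_of_set_list [1..<7]))"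
    unfolding SL_def e permutations_of_list_code by (simp del: set_upt)
  also have "card \<dots> = 4" by code_simp
  finally show ?case .
next
  case (Suc k)
  have "SL (2*Suc k) = (\<lambda>ys. (2*k+1)#(2*k+2)#ys) ` SL (2*k)"
    using step_sub[OF Suc(1)] step_sup[OF Suc(1)] by blast
  moreover have "inj_on (\<lambda>ys. (2*k+1)#(2*k+2)#ys) (SL (2*k))" by (rule inj_onI) simp
  ultimately show ?case using card_image Suc(2) by metis
qed

theorem theorem2p5:
  fixes n :: nat
  assumes "n \<ge> 3"
  shows "card {\<pi> \<in> dumont1 n. avoids_pattern (2*n) \<pi> 3 pat123} = 4"
  using card_bridge cardSL[OF assms] by simp

end
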